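(* Let $\mathbb B$ be a separable Banach space and $\mu$ a finite nonnegative Borel measure on $\mathbb B$. Then there exist a separable Banach space $\hat{\mathbb B}$ and a linear isometric embedding $\iota\colon\mathbb B\hookrightarrow\hat{\mathbb B}$ such that $\hat{\mathbb B}$ has the $\iota_\#\mu$-metric approximation property.
   Context: For a separable Banach space $\mathbb E$ and a finite nonnegative Borel measure $\nu$ on $\mathbb E$, $\mathbb E$ has the $\nu$-metric approximation property if there exists a sequence of finite-rank linear 1-Lipschitz maps $p_n\colon\mathbb E\to\mathbb E$ such that $\lim_n\|p_n(x)-x\|_{\mathbb E}=0$ for $\nu$-a.e. $x\in\mathbb E$. *)

theory Defs
  imports "HOL-Analysis.Analysis" "HOL-Probability.Probability"
begin

text \<open>The nu-metric approximation property for a (closed linear) subspace E of an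
ambient normed space, with nu a measure on the ambient Borel sets concentrated on E.\<close>

definition metric_approx_property :: "'b::real_normed_vector set \<Rightarrow> 'b measure \<Rightarrow> bool" where
  "metric_approx_property E \<nu> \<longleftrightarrow>
     (\<exists>p :: nat \<Rightarrow> 'b \<Rightarrow> 'b.
        (\<forall>n. (\<forall>x\<in>E. p n x \<in> E)
           \<and> (\<forall>x\<in>E. \<forall>y\<in>E. p n (x + y) = p n x + p n y)
           \<and> (\<forall>c::real. \<forall>x\<in>E. p n (c *\<^sub>R x) = c *\<^sub>R p n x)
           \<and> (\<exists>F. finite F \<and> p n ` E \<subseteq> span F)
           \<and> (\<forall>x\<in>E. \<forall>y\<in>E. norm (p n x - p n y) \<le> norm (x - y)))
      \<and> (AE x in \<nu>. (\<lambda>n. norm (p n x - x)) \<longlonglongrightarrow> 0))"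

end

theory Submission
  imports Defs
begin


definition sublin :: "('a::real_normed_vector \<Rightarrow> real) \<Rightarrow> bool" where
  "sublin q \<longleftrightarrow> (\<forall>x y. q (x + y) \<le> q x + q y) \<and> (\<forall>c x. c \<ge> 0 \<longrightarrow> q (c *\<^sub>R x) = c * q x)"

lemma sublinD:
  assumes "sublin q"
  shows "q (x + y) \<le> q x + q y" "c \<ge> 0 \<Longrightarrow> q (c *\<^sub>R x) = c * q x" "q 0 = 0"
  using assms unfolding sublin_def by auto

lemma sublin_lower:
  assumes "sublin q" shows "- q (- x) \<le> q x"
  using sublinD(1)[OF assms, of x "-x"] sublinD(3)[OF assms] by simp

definition red :: "('a::real_normed_vector \<Rightarrow> real) \<Rightarrow> 'a \<Rightarrow> 'a \<Rightarrow> real" where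
  "red q y x = (INF t\<in>{0<..}. q (x + t *\<^sub>R y) - t * q y)"

lemma red_lowbd:
  assumes "sublin q" "t > 0"
  shows "- q (- x) \<le> q (x + t *\<^sub>R y) - t * q y"
proof -
  have "q (t *\<^sub>R y) \<le> q (x + t *\<^sub>R y) + q (- x)"
    using sublinD(1)[OF assms(1), of "x + t *\<^sub>R y" "-x"] by simp
  then show ?thesis using sublinD(2)[OF assms(1), of t y] assms(2) by simp
qed

lemma red_bdd:
  assumes "sublin q"
  shows "bdd_below ((\<lambda>t. q (x + t *\<^sub>R y) - t * q y) ` {0<..})"
  using red_lowbd[OF assms] by (auto intro!: bdd_belowI[where m="- q (- x)"])

lemma red_le_t:
  assumes "sublin q" "t > 0"
  shows "red q y x \<le> q (x + t *\<^sub>R y) - t * q y"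
  unfolding red_def using assms red_bdd[OF assms(1)] by (auto intro!: cINF_lower)

lemma red_ge:
  assumes "sublin q" "\<And>t. t > 0 \<Longrightarrow> b \<le> q (x + t *\<^sub>R y) - t * q y"
  shows "b \<le> red q y x"
  unfolding red_def using assms by (auto intro!: cINF_greatest)

lemma red_le:
  assumes "sublin q" shows "red q y x \<le> q x"
  using red_le_t[OF assms, of 1 y x] sublinD(1)[OF assms, of x y] by simp

lemma red_ge_low:
  assumes "sublin q" shows "- q (- x) \<le> red q y x"
  using red_ge[OF assms] red_lowbd[OF assms] by blast

lemma red_sublin:
  assumes q: "sublin q" shows "sublin (red q y)"
  unfolding sublin_def
proof (intro conjI allI impI)
  fix x1 x2
  have A: "red q y (x1 + x2) - (q (x2 + t2 *\<^sub>R y) - t2 * q y) \<le> q (x1 + t1 *\<^sub>R y) - t1 * q y"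
    if "t1 > 0" "t2 > 0" for t1 t2
  proof -
    have "red q y (x1 + x2) \<le> q ((x1 + x2) + (t1 + t2) *\<^sub>R y) - (t1 + t2) * q y"
      using red_le_t[OF q, of "t1 + t2"] that by auto
    also have "q ((x1 + x2) + (t1 + t2) *\<^sub>R y) \<le> q (x1 + t1 *\<^sub>R y) + q (x2 + t2 *\<^sub>R y)"
      using sublinD(1)[OF q, of "x1 + t1 *\<^sub>R y" "x2 + t2 *\<^sub>R y"] by (simp add: algebra_simps)
    finally show ?thesis by (simp add: algebra_simps)
  qed
  have "red q y (x1 + x2) - (q (x2 + t2 *\<^sub>R y) - t2 * q y) \<le> red q y x1" if "t2 > 0" for t2
    using red_ge[OF q, of "red q y (x1 + x2) - (q (x2 + t2 *\<^sub>R y) - t2 * q y)"] A that by blast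
  then have "red q y (x1 + x2) - red q y x1 \<le> q (x2 + t2 *\<^sub>R y) - t2 * q y" if "t2 > 0" for t2
    using that by force
  then show "red q y (x1 + x2) \<le> red q y x1 + red q y x2"
    using red_ge[OF q, of "red q y (x1 + x2) - red q y x1"] by force
next
  fix c :: real and x
  assume c: "c \<ge> 0"
  show "red q y (c *\<^sub>R x) = c * red q y x"
  proof (cases "c = 0")
    case True
    have "red q y 0 \<le> 0"
      using red_le_t[OF q, of 1 y 0] sublinD(2)[OF q, of 1 y] by simp
    moreover have "0 \<le> red q y 0"
      using red_ge[OF q, of 0 0 y] sublinD(2)[OF q] by simp
    ultimately show ?thesis using True by simp
  next
    case False
    then have c: "c > 0" using c by simp
    have "red q y (c *\<^sub>R x) / c \<le> red q y x"
    proof (rule red_ge[OF q])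
      fix t :: real assume t: "t > 0"
      have "red q y (c *\<^sub>R x) \<le> q (c *\<^sub>R x + (c * t) *\<^sub>R y) - (c * t) * q y"
        using red_le_t[OF q, of "c * t"] c t by simp
      also have "q (c *\<^sub>R x + (c * t) *\<^sub>R y) = c * q (x + t *\<^sub>R y)"
        using sublinD(2)[OF q, of c "x + t *\<^sub>R y"] c by (simp add: algebra_simps)
      finally show "red q y (c *\<^sub>R x) / c \<le> q (x + t *\<^sub>R y) - t * q y"
        using c by (simp add: field_simps)
    qed
    moreover have "c * red q y x \<le> red q y (c *\<^sub>R x)"
    proof (rule red_ge[OF q])
      fix t :: real assume t: "t > 0"
      have "red q y x \<le> q (x + (t / c) *\<^sub>R y) - (t / c) * q y"
        using red_le_t[OF q, of "t / c"] c t by simp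
      moreover have "q (c *\<^sub>R x + t *\<^sub>R y) = c * q (x + (t / c) *\<^sub>R y)"
        using sublinD(2)[OF q, of c "x + (t / c) *\<^sub>R y"] c by (simp add: algebra_simps)
      ultimately show "c * red q y x \<le> q (c *\<^sub>R x + t *\<^sub>R y) - t * q y"
        using c by (simp add: field_simps mult_left_mono)
    qed
    ultimately show ?thesis using c by (simp add: field_simps)
  qed
qed

lemma red_y:
  assumes q: "sublin q"
  shows "red q y y = q y" "red q y (- y) = - q y"
proof -
  have s: "sublin (red q y)" by (rule red_sublin[OF q])
  have m: "red q y (- y) \<le> - q y"
    using red_le_t[OF q, of 1 y "- y"] sublinD(3)[OF q] by simp
  have l1: "- red q y (- y) \<le> red q y y" using sublin_lower[OF s, of y] by simp
  have l2: "- red q y y \<le> red q y (- y)" using sublin_lower[OF s, of "-y"] by simp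
  show "red q y y = q y" using red_le[OF q, of y y] m l1 by linarith
  show "red q y (- y) = - q y" using red_le[OF q, of y y] m l2 by linarith
qed

lemma sublin_norm: "sublin norm"
  unfolding sublin_def by (auto simp: norm_triangle_ineq)

primrec Qs :: "(nat \<Rightarrow> 'a::real_normed_vector) \<Rightarrow> nat \<Rightarrow> 'a \<Rightarrow> real" where
  "Qs e 0 = norm"
| "Qs e (Suc k) = red (Qs e k) (e k)"

lemma Qs_sublin: "sublin (Qs e k)"
  by (induction k) (auto simp: sublin_norm red_sublin)

lemma Qs_dec: "Qs e (Suc k) x \<le> Qs e k x"
  using red_le[OF Qs_sublin] by simp

lemma Qs_le_norm: "Qs e k x \<le> norm x"
proof (induction k)
  case (Suc k) then show ?case using Qs_dec[of e k x] by linarith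
qed simp

lemma Qs_low: "- norm x \<le> Qs e k x"
  using sublin_lower[OF Qs_sublin, of e k x] Qs_le_norm[of e k "- x"] by simp

lemma HB_exists:
  fixes d :: "nat \<Rightarrow> 'a::real_normed_vector" and a :: 'a
  assumes dense: "\<And>x \<epsilon>. \<epsilon> > 0 \<Longrightarrow> \<exists>k. norm (x - d k) < \<epsilon>"
  shows "\<exists>f. linear f \<and> (\<forall>x. \<bar>f x\<bar> \<le> norm x) \<and> f a = norm a"
proof -
  define e where "e = case_nat a d"
  define P where "P x = (INF k. Qs e k x)" for x
  have lim: "(\<lambda>k. Qs e k x) \<longlonglongrightarrow> P x" for x
    unfolding P_def
    by (rule LIMSEQ_decseq_INF) (auto intro!: bdd_belowI[where m="- norm x"] Qs_low decseq_SucI Qs_dec)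
  have Ple: "P x \<le> Qs e k x" for x k
    unfolding P_def by (rule cINF_lower) (auto intro!: bdd_belowI[where m="- norm x"] Qs_low)
  have Pnorm: "P x \<le> norm x" for x using Ple[of x 0] by simp
  have Padd: "P (x + y) \<le> P x + P y" for x y
    by (rule LIMSEQ_le[OF lim tendsto_add[OF lim lim]]) (auto intro: sublinD(1)[OF Qs_sublin])
  have Phom: "P (c *\<^sub>R x) = c * P x" if "c \<ge> 0" for c x
  proof -
    have "(\<lambda>k. Qs e k (c *\<^sub>R x)) \<longlonglongrightarrow> c * P x"
      using tendsto_mult_left[OF lim, of c x] sublinD(2)[OF Qs_sublin that, of e _ x] by presburger
    then show ?thesis using lim LIMSEQ_unique by blast
  qed
  have Ps: "sublin P" unfolding sublin_def using Padd Phom by blast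
  have g0: "P (e k) + P (- e k) \<le> 0" for k
  proof -
    have "P (- e k) \<le> Qs e (Suc k) (- e k)" by (rule Ple)
    moreover have "P (e k) \<le> Qs e (Suc k) (e k)" by (rule Ple)
    ultimately show ?thesis using red_y[OF Qs_sublin, of e k "e k"] by simp
  qed
  have ga: "norm a \<le> P a"
  proof -
    have "P (- e 0) \<le> Qs e (Suc 0) (- e 0)" by (rule Ple)
    then have "P (- a) \<le> - norm a" using red_y[OF Qs_sublin, of e 0 "e 0"] by (simp add: e_def)
    then show ?thesis using sublin_lower[OF Ps, of a] by simp
  qed
  have gle: "P x + P (- x) \<le> P z + P (- z) + 2 * norm (x - z)" for x z
  proof -
    have "P x \<le> P z + P (x - z)" using Padd[of z "x - z"] by simp
    moreover have "P (- x) \<le> P (- z) + P (z - x)" using Padd[of "- z" "z - x"] by simp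
    moreover have "P (x - z) \<le> norm (x - z)" "P (z - x) \<le> norm (x - z)"
      using Pnorm[of "x - z"] Pnorm[of "z - x"] by (auto simp: norm_minus_commute)
    ultimately show ?thesis by linarith
  qed
  have godd: "P (- x) = - P x" for x
  proof -
    have "P x + P (- x) \<le> 2 * \<epsilon>" if ep: "\<epsilon> > 0" for \<epsilon>
    proof -
      obtain k where k: "norm (x - d k) < \<epsilon>" using dense ep by blast
      have "P x + P (- x) \<le> P (e (Suc k)) + P (- e (Suc k)) + 2 * norm (x - d k)"
        using gle[of x "d k"] by (simp add: e_def)
      then show ?thesis using g0[of "Suc k"] k by linarith
    qed
    then have "P x + P (- x) \<le> 0"
    proof -
      assume h: "\<And>\<epsilon>. \<epsilon> > 0 \<Longrightarrow> P x + P (- x) \<le> 2 * \<epsilon>"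
      show ?thesis
      proof (rule ccontr)
        assume "\<not> P x + P (- x) \<le> 0"
        then have "(P x + P (- x)) / 4 > 0" by simp
        from h[OF this] show False using \<open>\<not> P x + P (- x) \<le> 0\<close> by (simp add: field_simps)
      qed
    qed
    then show ?thesis using sublin_lower[OF Ps, of x] by simp
  qed
  have lin: "linear P"
  proof (rule linearI)
    fix x y
    have "P x + P y \<le> P (x + y)" using Padd[of "- x" "- y"] godd[of "x + y"] godd[of x] godd[of y]
      by (simp add: algebra_simps)
    then show "P (x + y) = P x + P y" using Padd[of x y] by linarith
  next
    fix r x
    show "P (r *\<^sub>R x) = r *\<^sub>R P x"
    proof (cases "r \<ge> 0")
      case True then show ?thesis using Phom by simp
    next
      case False
      then have "P (r *\<^sub>R x) = P ((- r) *\<^sub>R (- x))" by simp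
      also have "\<dots> = (- r) * P (- x)" using Phom[of "- r" "- x"] False by simp
      finally show ?thesis using godd by simp
    qed
  qed
  have "\<bar>P x\<bar> \<le> norm x" for x using Pnorm[of x] Pnorm[of "- x"] godd[of x] by auto
  moreover have "P a = norm a" using ga Pnorm[of a] by simp
  ultimately show ?thesis using lin by blast
qed



definition samp :: "(nat \<Rightarrow> nat) \<Rightarrow> (nat \<Rightarrow>\<^sub>C real) \<Rightarrow> (nat \<Rightarrow>\<^sub>C real)" where
  "samp a y = Bcontfun (\<lambda>j. apply_bcontfun y (a j))"

lemma samp_mem: "(\<lambda>j::nat. apply_bcontfun (y :: nat \<Rightarrow>\<^sub>C real) (a j)) \<in> bcontfun"
proof (rule bcontfun_normI[where b="norm y"])
  show "continuous_on UNIV (\<lambda>j. apply_bcontfun y (a j))" by simp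
  fix j show "norm (apply_bcontfun y (a j)) \<le> norm y" by (rule norm_bounded)
qed

lemma samp_apply[simp]: "apply_bcontfun (samp a y) j = apply_bcontfun y (a j)"
  unfolding samp_def using samp_mem[of y a] by (simp add: Bcontfun_inverse)

lemma samp_linear: "linear (samp a)"
  by (rule linearI) (auto intro!: bcontfun_eqI)

lemma samp_norm: "norm (samp a y) \<le> norm y"
proof (rule norm_bound)
  fix j show "norm (apply_bcontfun (samp a y) j) \<le> norm y" unfolding samp_apply by (rule norm_bounded)
qed

lemma samp_bounded_linear: "bounded_linear (samp a)"
proof -
  interpret linear "samp a" by (rule samp_linear)
  show ?thesis by unfold_locales (auto intro!: exI[where x=1] samp_norm)
qed

lemma apply_bcontfun_sum:
  fixes g :: "'i \<Rightarrow> (nat \<Rightarrow>\<^sub>C real)"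
  shows "finite A \<Longrightarrow> apply_bcontfun (sum g A) j = (\<Sum>s\<in>A. apply_bcontfun (g s) j)"
  by (induction A rule: finite_induct) auto

definition ind :: "(nat \<Rightarrow> nat) \<Rightarrow> nat \<Rightarrow> (nat \<Rightarrow>\<^sub>C real)" where
  "ind a s = Bcontfun (\<lambda>j. if a j = s then 1 else 0)"

lemma ind_apply[simp]: "apply_bcontfun (ind a s) j = (if a j = s then 1 else 0)"
proof -
  have "(\<lambda>j. if a j = s then 1 else 0 :: real) \<in> bcontfun"
    by (rule bcontfun_normI[where b=1]) auto
  then show ?thesis unfolding ind_def by (simp add: Bcontfun_inverse)
qed

lemma samp_span:
  assumes "finite (range a)"
  shows "samp a y \<in> span (ind a ` range a)"
proof -
  have "samp a y = (\<Sum>s\<in>range a. apply_bcontfun y s *\<^sub>R ind a s)"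
  proof (rule bcontfun_eqI)
    fix j
    have "(\<Sum>s\<in>range a. apply_bcontfun y s * (if a j = s then 1 else 0)) = apply_bcontfun y (a j)"
      using assms by (simp add: if_distrib sum.delta' cong: if_cong)
    then show "apply_bcontfun (samp a y) j = apply_bcontfun (\<Sum>s\<in>range a. apply_bcontfun y s *\<^sub>R ind a s) j"
      using assms by (simp add: apply_bcontfun_sum)
  qed
  also have "\<dots> \<in> span (ind a ` range a)"
    by (intro span_sum span_scale span_base) auto
  finally show ?thesis .
qed

lemma floor_eq_diff: "floor (u::real) = floor w \<Longrightarrow> \<bar>u - w\<bar> < 1"
  by linarith

lemma net_exists:
  fixes z :: "nat \<Rightarrow> (nat \<Rightarrow>\<^sub>C real)" and \<delta> :: real
  assumes "\<delta> > 0"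
  shows "\<exists>a. finite (range a) \<and> (\<forall>j. \<forall>i<N. \<bar>apply_bcontfun (z i) j - apply_bcontfun (z i) (a j)\<bar> \<le> \<delta>)"
proof -
  define R where "R = (\<Sum>i<N. norm (z i))"
  define v where "v j = restrict (\<lambda>i. floor (apply_bcontfun (z i) j / \<delta>)) {..<N}" for j
  define a where "a j = (LEAST k. v k = v j)" for j
  have va: "v (a j) = v j" for j unfolding a_def by (rule LeastI[of _ j]) simp
  have bnd: "\<bar>apply_bcontfun (z i) j\<bar> \<le> R" if "i < N" for i j
  proof -
    have "\<bar>apply_bcontfun (z i) j\<bar> \<le> norm (z i)" using norm_bounded[of "z i" j] by simp
    also have "norm (z i) \<le> R" unfolding R_def
      using that by (intro member_le_sum) auto
    finally show ?thesis .
  qed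
  define lo where "lo = floor ((- R) / \<delta>)"
  define hi where "hi = floor (R / \<delta>)"
  have "v j \<in> {..<N} \<rightarrow>\<^sub>E {lo .. hi}" for j
  proof (rule PiE_I)
    fix i assume i: "i \<in> {..<N}"
    have "- R \<le> apply_bcontfun (z i) j" "apply_bcontfun (z i) j \<le> R"
      using bnd[of i j] i by auto
    then have 1: "(- R) / \<delta> \<le> apply_bcontfun (z i) j / \<delta>" and 2: "apply_bcontfun (z i) j / \<delta> \<le> R / \<delta>"
      using assms by (intro divide_right_mono; simp)+
    have "lo \<le> floor (apply_bcontfun (z i) j / \<delta>)" unfolding lo_def by (rule floor_mono[OF 1])
    moreover have "floor (apply_bcontfun (z i) j / \<delta>) \<le> hi" unfolding hi_def by (rule floor_mono[OF 2])
    ultimately show "v j i \<in> {lo..hi}" using i by (simp add: v_def)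
  next
    fix i assume "i \<notin> {..<N}" then show "v j i = undefined" by (simp add: v_def)
  qed
  then have "range v \<subseteq> {..<N} \<rightarrow>\<^sub>E {lo .. hi}" by blast
  moreover have "finite ({..<N} \<rightarrow>\<^sub>E {lo .. hi})" by (rule finite_PiE) auto
  ultimately have fv: "finite (range v)" by (rule finite_subset)
  have "range a \<subseteq> (\<lambda>w. LEAST k. v k = w) ` range v" unfolding a_def by blast
  moreover have "finite ((\<lambda>w. LEAST k. v k = w) ` range v)" using fv by (rule finite_imageI)
  ultimately have fa: "finite (range a)" by (rule finite_subset)
  have dd: "\<bar>apply_bcontfun (z i) j - apply_bcontfun (z i) (a j)\<bar> \<le> \<delta>" if "i < N" for i j
  proof -
    have "v (a j) i = v j i" using va by simp
    then have "floor (apply_bcontfun (z i) j / \<delta>) = floor (apply_bcontfun (z i) (a j) / \<delta>)"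
      using that by (simp add: v_def)
    then have "\<bar>apply_bcontfun (z i) j / \<delta> - apply_bcontfun (z i) (a j) / \<delta>\<bar> < 1"
      by (rule floor_eq_diff)
    then have "\<bar>apply_bcontfun (z i) j - apply_bcontfun (z i) (a j)\<bar> / \<delta> < 1"
      using assms by (simp add: diff_divide_distrib[symmetric])
    then show ?thesis using assms by (simp add: divide_less_eq)
  qed
  show ?thesis
    by (rule exI[where x=a]) (use fa dd in blast)
qed



lemma scaleR_sum_list_map:
  "(a::real) *\<^sub>R sum_list (map f l) = sum_list (map (\<lambda>x. a *\<^sub>R (f x :: 'b::real_vector)) l)"
  by (induction l) (auto simp: scaleR_right_distrib)

lemma rat_seq_exists:
  fixes c :: real
  shows "\<exists>rs :: nat \<Rightarrow> rat. (\<lambda>n. of_rat (rs n)) \<longlonglongrightarrow> c"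
proof -
  have "\<exists>r::rat. \<bar>of_rat r - c\<bar> < inverse (real (Suc n))" for n
  proof -
    have "c < c + inverse (real (Suc n))" by simp
    from Rats_dense_in_real[OF this] obtain q where q: "q \<in> \<rat>" "c < q" "q < c + inverse (real (Suc n))" by blast
    from q(1) obtain r where "q = of_rat r" by (auto elim: Rats_cases)
    with q show ?thesis by (intro exI[where x=r]) auto
  qed
  then obtain rs where rs: "\<And>n. \<bar>of_rat (rs n) - c\<bar> < inverse (real (Suc n))" by metis
  have "(\<lambda>n. of_rat (rs n) - c) \<longlonglongrightarrow> 0"
    by (rule Lim_null_comparison[OF _ LIMSEQ_inverse_real_of_nat]) (use rs in \<open>auto intro: less_imp_le always_eventually\<close>)
  then have "(\<lambda>n. (of_rat (rs n) - c) + c) \<longlonglongrightarrow> 0 + c" by (intro tendsto_add) auto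
  then show ?thesis by (intro exI[where x=rs]) simp
qed

lemma sep_span:
  fixes C :: "'b::real_normed_vector set"
  assumes "countable C"
  shows "separable_space (top_of_set (closure (span C)))" "subspace (closure (span C))"
proof -
  define F :: "(rat \<times> 'b) list \<Rightarrow> 'b" where "F = (\<lambda>l. sum_list (map (\<lambda>(r,c). (of_rat r :: real) *\<^sub>R c) l))"
  define Q where "Q = F ` lists (UNIV \<times> C)"
  have cQ: "countable Q" unfolding Q_def using assms by (intro countable_image countable_lists) auto
  have QS: "F l \<in> span C" if "l \<in> lists (UNIV \<times> C)" for l
    using that by (induction l) (auto simp: F_def span_zero intro!: span_add span_scale intro: span_base)
  then have QspanC: "Q \<subseteq> span C" unfolding Q_def by blast
  have Qadd: "q1 + q2 \<in> Q" if qq: "q1 \<in> Q" "q2 \<in> Q" for q1 q2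
  proof -
    obtain l1 l2 where "l1 \<in> lists (UNIV \<times> C)" "l2 \<in> lists (UNIV \<times> C)" "q1 = F l1" "q2 = F l2"
      using qq unfolding Q_def by blast
    then show ?thesis unfolding Q_def by (intro image_eqI[where x="l1 @ l2"]) (auto simp: F_def)
  qed
  have Qscale: "of_rat r *\<^sub>R q \<in> Q" if qq: "q \<in> Q" for q r
  proof -
    obtain l where l: "l \<in> lists (UNIV \<times> C)" "q = F l"
      using qq unfolding Q_def by blast
    have "of_rat r *\<^sub>R F l = F (map (\<lambda>(s, c). (r * s, c)) l)"
      unfolding F_def scaleR_sum_list_map by (induction l) (auto simp: of_rat_mult)
    moreover have "map (\<lambda>(s, c). (r * s, c)) l \<in> lists (UNIV \<times> C)" using l(1) by auto
    ultimately show ?thesis unfolding Q_def using l(2) by auto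
  qed
  have CQ: "C \<subseteq> Q"
  proof
    fix c assume "c \<in> C"
    then show "c \<in> Q" unfolding Q_def by (intro image_eqI[where x="[(1, c)]"]) (auto simp: F_def)
  qed
  have subQ: "subspace (closure Q)"
    unfolding subspace_def
  proof (intro conjI ballI allI)
    have "0 \<in> Q" unfolding Q_def by (intro image_eqI[where x="[]"]) (auto simp: F_def)
    then show "0 \<in> closure Q" using closure_subset by blast
  next
    fix x y assume "x \<in> closure Q" "y \<in> closure Q"
    then obtain f g where "\<And>n. f n \<in> Q" "f \<longlonglongrightarrow> x" "\<And>n. g n \<in> Q" "g \<longlonglongrightarrow> y"
      unfolding closure_sequential by blast
    then show "x + y \<in> closure Q" unfolding closure_sequential
      by (intro exI[where x="\<lambda>n. f n + g n"]) (auto intro: Qadd tendsto_add)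
  next
    fix c :: real and x assume "x \<in> closure Q"
    then obtain f where "\<And>n. f n \<in> Q" "f \<longlonglongrightarrow> x"
      unfolding closure_sequential by blast
    moreover obtain rs :: "nat \<Rightarrow> rat" where "(\<lambda>n. of_rat (rs n)) \<longlonglongrightarrow> c" using rat_seq_exists by blast
    ultimately show "c *\<^sub>R x \<in> closure Q" unfolding closure_sequential
      by (intro exI[where x="\<lambda>n. of_rat (rs n) *\<^sub>R f n"]) (auto intro: Qscale tendsto_scaleR)
  qed
  have "span C \<subseteq> closure Q"
    by (rule span_minimal) (use CQ closure_subset subQ in auto)
  then have "closure (span C) \<subseteq> closure Q" by (rule closure_minimal) simp
  moreover have "closure Q \<subseteq> closure (span C)" using QspanC by (rule closure_mono)
  ultimately have eq: "closure (span C) = closure Q" by blast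
  then show "subspace (closure (span C))" using subQ by simp
  show "separable_space (top_of_set (closure (span C)))"
    unfolding separable_space_def
  proof (intro exI[where x=Q] conjI)
    show "countable Q" by (rule cQ)
    show "Q \<subseteq> topspace (top_of_set (closure (span C)))"
      using QspanC closure_subset by auto
    have "closure (span C) \<inter> Q = Q" using QspanC closure_subset by auto
    then show "top_of_set (closure (span C)) closure_of Q = topspace (top_of_set (closure (span C)))"
      unfolding closure_of_subtopology using eq by simp
  qed
qed



lemma main_linf:
  fixes \<nu> :: "(nat \<Rightarrow>\<^sub>C real) measure" and s :: "nat \<Rightarrow> (nat \<Rightarrow>\<^sub>C real)"
  assumes fin: "finite_measure \<nu>" and sets: "sets \<nu> = sets borel"
    and conc: "\<And>\<delta>. \<delta> > 0 \<Longrightarrow> emeasure \<nu> (space \<nu> - (\<Union>i. ball (s i) \<delta>)) = 0"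
  shows "\<exists>E. subspace E \<and> closed E \<and> separable_space (top_of_set E) \<and> range s \<subseteq> E
           \<and> metric_approx_property E \<nu>"
proof -
  interpret finite_measure \<nu> by (rule fin)
  have sp: "space \<nu> = UNIV" using sets_eq_imp_space_eq[OF sets] by simp
  have opn: "X \<in> sets \<nu>" if "open X" for X using that sets by simp
  define \<delta> where "\<delta> n = inverse (real (Suc n))" for n
  have \<delta>pos: "\<delta> n > 0" for n unfolding \<delta>_def by simp
  define U where "U n M = (\<Union>i<M. ball (s i) (\<delta> n))" for n M
  have "\<exists>M. measure \<nu> (space \<nu> - U n M) < (1/2)^n" for n
  proof -
    have inc: "incseq (U n)" unfolding U_def incseq_def by (intro allI impI UN_mono) auto
    have UU: "(\<Union>M. U n M) = (\<Union>i. ball (s i) (\<delta> n))" unfolding U_def by auto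
    have rs: "range (U n) \<subseteq> sets \<nu>" unfolding U_def by (auto intro!: opn)
    have lim: "(\<lambda>M. measure \<nu> (U n M)) \<longlonglongrightarrow> measure \<nu> (\<Union>i. ball (s i) (\<delta> n))"
      using finite_Lim_measure_incseq[OF rs inc] UU by simp
    have "measure \<nu> (space \<nu> - (\<Union>i. ball (s i) (\<delta> n))) = 0"
      using conc[OF \<delta>pos[of n]] by (simp add: measure_def)
    then have full: "measure \<nu> (\<Union>i. ball (s i) (\<delta> n)) = measure \<nu> (space \<nu>)"
      using finite_measure_compl[of "\<Union>i. ball (s i) (\<delta> n)"] opn by auto
    have "measure \<nu> (space \<nu>) - (1/2)^n < measure \<nu> (space \<nu>)" by simp
    from order_tendstoD(1)[OF lim[unfolded full] this]
    obtain M where "measure \<nu> (space \<nu>) - (1/2)^n < measure \<nu> (U n M)"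
      by (auto simp: eventually_sequentially)
    moreover have "measure \<nu> (space \<nu> - U n M) = measure \<nu> (space \<nu>) - measure \<nu> (U n M)"
      using finite_measure_compl[of "U n M"] rs by auto
    ultimately show ?thesis by (intro exI[where x=M]) linarith
  qed
  then obtain N where N: "\<And>n. measure \<nu> (space \<nu> - U n (N n)) < (1/2)^n" by metis
  have "\<exists>a. finite (range a) \<and> (\<forall>j. \<forall>i<N n. \<bar>apply_bcontfun (s i) j - apply_bcontfun (s i) (a j)\<bar> \<le> \<delta> n)" for n
    by (rule net_exists[OF \<delta>pos])
  then obtain a where afin: "\<And>n. finite (range (a n))"
    and anet: "\<And>n j i. i < N n \<Longrightarrow> \<bar>apply_bcontfun (s i) j - apply_bcontfun (s i) (a n j)\<bar> \<le> \<delta> n"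
    by metis
  define p where "p n = samp (a n)" for n
  have err: "norm (p n y - y) \<le> 3 * \<delta> n" if y: "y \<in> U n (N n)" for n y
  proof -
    from y obtain i where i: "i < N n" "dist (s i) y < \<delta> n" unfolding U_def by auto
    have cl: "\<bar>apply_bcontfun (s i) k - apply_bcontfun y k\<bar> \<le> \<delta> n" for k
    proof -
      have "norm (apply_bcontfun (s i - y) k) \<le> norm (s i - y)" by (rule norm_bounded)
      then show ?thesis using i(2) by (simp add: dist_norm)
    qed
    show ?thesis
    proof (rule norm_bound)
      fix j
      have "\<bar>apply_bcontfun y (a n j) - apply_bcontfun y j\<bar>
            \<le> \<bar>apply_bcontfun (s i) (a n j) - apply_bcontfun y (a n j)\<bar>
              + \<bar>apply_bcontfun (s i) j - apply_bcontfun (s i) (a n j)\<bar>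
              + \<bar>apply_bcontfun (s i) j - apply_bcontfun y j\<bar>" by linarith
      also have "\<dots> \<le> \<delta> n + \<delta> n + \<delta> n" using cl[of "a n j"] cl[of j] anet[OF i(1), of j] by linarith
      finally show "norm (apply_bcontfun (p n y - y) j) \<le> 3 * \<delta> n" by (simp add: p_def)
    qed
  qed
  have ae: "AE y in \<nu>. (\<lambda>n. norm (p n y - y)) \<longlonglongrightarrow> 0"
  proof -
    define A where "A n = space \<nu> - U n (N n)" for n
    have "AE y in \<nu>. eventually (\<lambda>n. y \<in> space \<nu> - A n) sequentially"
    proof (rule borel_cantelli_AE1)
      show "A n \<in> sets \<nu>" for n unfolding A_def U_def by (intro sets.compl_sets opn) auto
      show "emeasure \<nu> (A n) < \<infinity>" for n by (simp add: less_top[symmetric])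
      show "summable (\<lambda>n. measure \<nu> (A n))"
        by (rule summable_comparison_test'[OF summable_geometric[of "1/2::real"], of 0])
           (use N in \<open>auto simp: A_def less_imp_le\<close>)
    qed
    then show ?thesis
    proof (rule AE_mp, intro AE_I2 impI)
      fix y assume "eventually (\<lambda>n. y \<in> space \<nu> - A n) sequentially"
      then have "eventually (\<lambda>n. norm (norm (p n y - y)) \<le> 3 * \<delta> n) sequentially"
        by (rule eventually_mono) (use err in \<open>auto simp: A_def sp\<close>)
      moreover have "(\<lambda>n. 3 * \<delta> n) \<longlonglongrightarrow> 0"
        unfolding \<delta>_def using tendsto_mult_right_zero[OF LIMSEQ_inverse_real_of_nat, of 3] by simp
      ultimately show "(\<lambda>n. norm (p n y - y)) \<longlonglongrightarrow> 0" by (rule Lim_null_comparison)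
    qed
  qed
  define C where "C = (\<lambda>(ns, i). foldr p ns (s i)) ` (UNIV :: (nat list \<times> nat) set)"
  define E where "E = closure (span C)"
  have cC: "countable C" unfolding C_def by (rule countable_image) simp
  have sC: "range s \<subseteq> C" unfolding C_def by (auto intro!: image_eqI[where x="([], i)" for i])
  have pC: "p n ` C \<subseteq> C" for n unfolding C_def by (auto intro!: image_eqI[where x="(n # ns, i)" for ns i])
  have plin: "linear (p n)" for n unfolding p_def by (rule samp_linear)
  have pbl: "bounded_linear (p n)" for n unfolding p_def by (rule samp_bounded_linear)
  have pE: "p n ` E \<subseteq> E" for n
  proof -
    have "p n ` span C = span (p n ` C)" by (rule span_linear_image[OF plin, symmetric])
    also have "\<dots> \<subseteq> span C" by (rule span_mono[OF pC])
    finally have "p n ` span C \<subseteq> E" unfolding E_def using closure_subset by blast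
    then show ?thesis unfolding E_def
      by (intro image_closure_subset linear_continuous_on pbl) auto
  qed
  have "metric_approx_property E \<nu>"
    unfolding metric_approx_property_def
  proof (intro exI[where x=p] conjI allI ballI)
    fix n
    show "x \<in> E \<Longrightarrow> p n x \<in> E" for x using pE by blast
    show "p n (x + y) = p n x + p n y" for x y unfolding p_def by (rule bcontfun_eqI) simp
    show "p n (c *\<^sub>R x) = c *\<^sub>R p n x" for c x unfolding p_def by (rule bcontfun_eqI) simp
    show "\<exists>F. finite F \<and> p n ` E \<subseteq> span F"
      using samp_span[OF afin[of n]] afin[of n] unfolding p_def by blast
    show "norm (p n x - p n y) \<le> norm (x - y)" for x y
    proof -
      have "p n x - p n y = samp (a n) (x - y)" unfolding p_def by (rule bcontfun_eqI) simp
      then show ?thesis using samp_norm by simp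
    qed
  next
    show "AE x in \<nu>. (\<lambda>n. norm (p n x - x)) \<longlonglongrightarrow> 0" by (rule ae)
  qed
  moreover have "range s \<subseteq> E" unfolding E_def using sC span_superset closure_subset by blast
  ultimately show ?thesis
    using sep_span[OF cC] unfolding E_def by blast
qed


lemma embed_exists:
  fixes d :: "nat \<Rightarrow> 'a::real_normed_vector"
  assumes dense: "\<And>x \<epsilon>. \<epsilon> > 0 \<Longrightarrow> \<exists>k. norm (x - d k) < \<epsilon>"
  shows "\<exists>\<iota> :: 'a \<Rightarrow> (nat \<Rightarrow>\<^sub>C real). linear \<iota> \<and> (\<forall>x. norm (\<iota> x) = norm x)"
proof -
  have "\<exists>f. linear f \<and> (\<forall>x. \<bar>f x\<bar> \<le> norm x) \<and> f (d k) = norm (d k)" for k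
    by (rule HB_exists[OF dense])
  then obtain f where flin: "\<And>k. linear (f k)" and fb: "\<And>k x. \<bar>f k x\<bar> \<le> norm x"
    and fn: "\<And>k. f k (d k) = norm (d k)" by metis
  define \<iota> where "\<iota> x = Bcontfun (\<lambda>k. f k x)" for x
  have mem: "(\<lambda>k::nat. f k x) \<in> bcontfun" for x
  proof (rule bcontfun_normI[where b="norm x"])
    show "continuous_on UNIV (\<lambda>k::nat. f k x)" by simp
    fix k show "norm (f k x) \<le> norm x" using fb by simp
  qed
  have iap: "apply_bcontfun (\<iota> x) k = f k x" for x k
    unfolding \<iota>_def using mem[of x] by (simp add: Bcontfun_inverse)
  have fadd: "f k (x + y) = f k x + f k y" and fsc: "f k (c *\<^sub>R x) = c * f k x" for k x y c
    using flin[of k] unfolding linear_iff by auto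
  have "linear \<iota>"
    unfolding linear_iff
  proof (intro conjI allI)
    fix x y show "\<iota> (x + y) = \<iota> x + \<iota> y"
      by (rule bcontfun_eqI) (simp add: iap fadd fsc)
  next
    fix c x show "\<iota> (c *\<^sub>R x) = c *\<^sub>R \<iota> x"
      by (rule bcontfun_eqI) (simp add: iap fadd fsc)
  qed
  moreover have "norm (\<iota> x) = norm x" for x
  proof (rule antisym)
    show "norm (\<iota> x) \<le> norm x"
      by (rule norm_bound) (simp add: iap fb)
    have "norm x \<le> norm (\<iota> x) + 2 * \<epsilon>" if ep: "\<epsilon> > 0" for \<epsilon>
    proof -
      obtain k where k: "norm (x - d k) < \<epsilon>" using dense ep by blast
      have "f k x = f k (d k) - f k (d k - x)"
        using flin[of k] by (simp add: linear_diff)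
      moreover have "f k (d k - x) \<le> norm (d k - x)" using fb[of k "d k - x"] by simp
      moreover have "norm x \<le> norm (d k) + norm (d k - x)" using norm_triangle_sub[of x "d k"]
        by (simp add: norm_minus_commute)
      moreover have "\<bar>f k x\<bar> \<le> norm (\<iota> x)" using norm_bounded[of "\<iota> x" k] by (simp add: iap)
      ultimately show ?thesis using k fn[of k] by (simp add: norm_minus_commute)
    qed
    then show "norm x \<le> norm (\<iota> x)"
    proof -
      assume h: "\<And>\<epsilon>. \<epsilon> > 0 \<Longrightarrow> norm x \<le> norm (\<iota> x) + 2 * \<epsilon>"
      show ?thesis
      proof (rule ccontr)
        assume nn: "\<not> norm x \<le> norm (\<iota> x)"
        then have "(norm x - norm (\<iota> x)) / 4 > 0" by simp
        from h[OF this] show False using nn by (simp add: field_simps)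
      qed
    qed
  qed
  ultimately show ?thesis by blast
qed

theorem lemma2p4:
  fixes \<mu> :: "'a::banach measure"
  assumes "separable_space (euclidean :: 'a topology)"
    and "finite_measure \<mu>"
    and "sets \<mu> = sets borel"
  shows "\<exists>(E :: (nat \<Rightarrow>\<^sub>C real) set) (\<iota> :: 'a \<Rightarrow> (nat \<Rightarrow>\<^sub>C real)).
           subspace E \<and> closed E \<and> separable_space (top_of_set E)
         \<and> linear \<iota> \<and> (\<forall>x. norm (\<iota> x) = norm x) \<and> range \<iota> \<subseteq> E
         \<and> metric_approx_property E (distr \<mu> borel \<iota>)"
proof -
  obtain C :: "'a set" where cC: "countable C" and clC: "closure C = UNIV"
    using assms(1) unfolding separable_space_def by auto
  have Cne: "C \<noteq> {}" using clC by auto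
  define d where "d = from_nat_into C"
  have rd: "range d = C" unfolding d_def using Cne cC by simp
  have dense: "\<exists>k. norm (x - d k) < \<epsilon>" if ep: "\<epsilon> > 0" for x \<epsilon>
  proof -
    have "x \<in> closure C" using clC by simp
    then obtain y where "y \<in> C" "dist y x < \<epsilon>" using ep closure_approachable by blast
    then show ?thesis using rd by (auto simp: dist_norm norm_minus_commute)
  qed
  obtain \<iota> :: "'a \<Rightarrow> (nat \<Rightarrow>\<^sub>C real)" where ilin: "linear \<iota>" and inorm: "\<And>x. norm (\<iota> x) = norm x"
    using embed_exists[OF dense] by blast
  have ibl: "bounded_linear \<iota>"
  proof -
    interpret linear \<iota> by (rule ilin)
    show ?thesis by unfold_locales (auto intro!: exI[where x=1] simp: inorm)
  qed
  have idist: "dist (\<iota> x) (\<iota> y) = dist x y" for x y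
    by (simp add: dist_norm linear_diff[OF ilin, symmetric] inorm)
  have imeas: "\<iota> \<in> measurable \<mu> borel"
    using measurable_cong_sets[OF assms(3) refl] borel_measurable_continuous_onI[OF linear_continuous_on[OF ibl]]
    by blast
  define \<nu> where "\<nu> = distr \<mu> borel \<iota>"
  have fin: "finite_measure \<nu>" unfolding \<nu>_def
    using finite_measure.finite_measure_distr[OF assms(2) imeas] .
  have sets: "sets \<nu> = sets borel" unfolding \<nu>_def by simp
  have conc: "emeasure \<nu> (space \<nu> - (\<Union>i. ball ((\<iota> \<circ> d) i) \<delta>)) = 0" if dp: "\<delta> > 0" for \<delta>
  proof -
    have "space \<nu> - (\<Union>i. ball ((\<iota> \<circ> d) i) \<delta>) \<in> sets borel"
      using sets sets_eq_imp_space_eq[OF sets] by auto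
    then have "emeasure \<nu> (space \<nu> - (\<Union>i. ball ((\<iota> \<circ> d) i) \<delta>))
        = emeasure \<mu> (\<iota> -` (space \<nu> - (\<Union>i. ball ((\<iota> \<circ> d) i) \<delta>)) \<inter> space \<mu>)"
      unfolding \<nu>_def by (rule emeasure_distr[OF imeas])
    also have "\<iota> -` (space \<nu> - (\<Union>i. ball ((\<iota> \<circ> d) i) \<delta>)) \<inter> space \<mu> = {}"
    proof -
      have "\<iota> x \<in> (\<Union>i. ball ((\<iota> \<circ> d) i) \<delta>)" for x
      proof -
        obtain k where "norm (x - d k) < \<delta>" using dense dp by blast
        then have "dist (\<iota> (d k)) (\<iota> x) < \<delta>" using idist by (simp add: dist_norm norm_minus_commute)
        then show ?thesis by auto
      qed
      then show ?thesis by auto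
    qed
    finally show ?thesis by simp
  qed
  obtain E where E: "subspace E" "closed E" "separable_space (top_of_set E)" "range (\<iota> \<circ> d) \<subseteq> E"
    "metric_approx_property E \<nu>"
    using main_linf[OF fin sets conc] by blast
  have "range \<iota> \<subseteq> E"
  proof
    fix z assume "z \<in> range \<iota>"
    then obtain x where z: "z = \<iota> x" by blast
    have "z \<in> closure (range (\<iota> \<circ> d))"
      unfolding closure_approachable
    proof (intro allI impI)
      fix e :: real assume "e > 0"
      then obtain k where "norm (x - d k) < e" using dense by blast
      then show "\<exists>y\<in>range (\<iota> \<circ> d). dist y z < e"
        using idist z by (auto simp: dist_norm norm_minus_commute)
    qed
    then show "z \<in> E" using E(2,4) closure_minimal by blast
  qed
  then show ?thesis using E ilin inorm unfolding \<nu>_def by blast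
qed

end
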